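(* There is a number $c>0$ such that every trajectory of $$\dot R = R\hat\Omega - k_0R(R^TR-I)-k_2(\pi(R,\Omega)-\pi_0)\Omega^T\mathbb I,$$ $$\dot\Omega = \mathbb I^{-1}((\mathbb I\Omega)\times\Omega) - k_1(E(\Omega)-E_0)\mathbb I\Omega - k_2\mathbb I R^T(\pi(R,\Omega)-\pi_0)$$ starting in $V^{-1}([0,c])$ stays in $V^{-1}([0,c])$ for all $t\ge0$ and converges as $t\to\infty$ to $$V^{-1}(0)=\{(R,\Omega)\in\mathbb R^{3\times3}\times\mathbb R^3: R\in SO(3),\ E(\Omega)=E_0,\ \pi(R,\Omega)=\pi_0\}.$$ Furthermore, $V^{-1}(0)$ is invariant under both this system and the free rigid body system $\dot R=R\hat\Omega$, $\dot\Omega=\mathbb I^{-1}((\mathbb I\Omega)\times\Omega)$ (considered on $\mathbb R^{3\times3}\times\mathbb R^3$).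
   Context: $\mathbb I$ is a symmetric positive definite $3\times3$ matrix. For $\Omega=(\Omega_1,\Omega_2,\Omega_3)$, $\hat\Omega=\begin{bmatrix}0&-\Omega_3&\Omega_2\\ \Omega_3&0&-\Omega_1\\ -\Omega_2&\Omega_1&0\end{bmatrix}$. $\|A\|=\sqrt{\operatorname{trace}(A^TA)}$. $E(\Omega)=\tfrac12\Omega^T\mathbb I\Omega$, $\pi(R,\Omega)=R\mathbb I\Omega$. Fix $R_0\in SO(3)$, $\Omega_0\in\mathbb R^3\setminus\{0\}$, $E_0=E(\Omega_0)$, $\pi_0=\pi(R_0,\Omega_0)$, constants $k_0,k_1,k_2>0$, $U=\{(R,\Omega):\det R>0\}$, and $V(R,\Omega)=\tfrac{k_0}{4}\|R^TR-I\|^2+\tfrac{k_1}{2}|E(\Omega)-E_0|^2+\tfrac{k_2}{2}|\pi(R,\Omega)-\pi_0|^2$ on $U$. *)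

theory Defs
  imports "HOL-Analysis.Analysis" "HOL-Analysis.Cross3"
begin

type_synonym mat3 = "real^3^3"
type_synonym vec3 = "real^3"

definition hat :: "vec3 \<Rightarrow> mat3" where
  "hat W = vector [vector [0, - W$3, W$2],
                   vector [W$3, 0, - W$1],
                   vector [- W$2, W$1, 0]]"

definition frob :: "mat3 \<Rightarrow> real" where
  "frob A = sqrt (trace (transpose A ** A))"

definition outer :: "vec3 \<Rightarrow> vec3 \<Rightarrow> mat3" where
  "outer a b = (\<chi> i j. a$i * b$j)"

definition sym_pos_def_mat :: "mat3 \<Rightarrow> bool" where
  "sym_pos_def_mat J \<longleftrightarrow> transpose J = J \<and> (\<forall>v. v \<noteq> 0 \<longrightarrow> v \<bullet> (J *v v) > 0)"

definition energy :: "mat3 \<Rightarrow> vec3 \<Rightarrow> real" where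
  "energy J W = (1/2) * (W \<bullet> (J *v W))"

definition angmom :: "mat3 \<Rightarrow> mat3 \<Rightarrow> vec3 \<Rightarrow> vec3" where
  "angmom J R W = R *v (J *v W)"

definition dom_U :: "(mat3 \<times> vec3) set" where
  "dom_U = {(R, W). det R > 0}"

definition lyapV :: "mat3 \<Rightarrow> real \<Rightarrow> real \<Rightarrow> real \<Rightarrow> mat3 \<Rightarrow> vec3 \<Rightarrow> mat3 \<Rightarrow> vec3 \<Rightarrow> real" where
  "lyapV J k0 k1 k2 R0 W0 R W =
     k0 / 4 * (frob (transpose R ** R - mat 1))\<^sup>2
   + k1 / 2 * \<bar>energy J W - energy J W0\<bar>\<^sup>2
   + k2 / 2 * (norm (angmom J R W - angmom J R0 W0))\<^sup>2"

definition ctrl_R :: "mat3 \<Rightarrow> real \<Rightarrow> real \<Rightarrow> real \<Rightarrow> mat3 \<Rightarrow> vec3 \<Rightarrow> mat3 \<Rightarrow> vec3 \<Rightarrow> mat3" where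
  "ctrl_R J k0 k1 k2 R0 W0 R W =
     R ** hat W - k0 *\<^sub>R (R ** (transpose R ** R - mat 1))
     - k2 *\<^sub>R outer (angmom J R W - angmom J R0 W0) (W v* J)"

definition ctrl_W :: "mat3 \<Rightarrow> real \<Rightarrow> real \<Rightarrow> real \<Rightarrow> mat3 \<Rightarrow> vec3 \<Rightarrow> mat3 \<Rightarrow> vec3 \<Rightarrow> vec3" where
  "ctrl_W J k0 k1 k2 R0 W0 R W =
     matrix_inv J *v (cross3 (J *v W) W)
     - (k1 * (energy J W - energy J W0)) *\<^sub>R (J *v W)
     - k2 *\<^sub>R (J *v (transpose R *v (angmom J R W - angmom J R0 W0)))"

definition ctrl_solution :: "mat3 \<Rightarrow> real \<Rightarrow> real \<Rightarrow> real \<Rightarrow> mat3 \<Rightarrow> vec3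
    \<Rightarrow> (real \<Rightarrow> mat3) \<Rightarrow> (real \<Rightarrow> vec3) \<Rightarrow> bool" where
  "ctrl_solution J k0 k1 k2 R0 W0 Rt Wt \<longleftrightarrow>
     (\<forall>t\<ge>0. (Rt has_vector_derivative ctrl_R J k0 k1 k2 R0 W0 (Rt t) (Wt t)) (at t within {0..})
          \<and> (Wt has_vector_derivative ctrl_W J k0 k1 k2 R0 W0 (Rt t) (Wt t)) (at t within {0..}))"

definition free_solution :: "mat3 \<Rightarrow> (real \<Rightarrow> mat3) \<Rightarrow> (real \<Rightarrow> vec3) \<Rightarrow> bool" where
  "free_solution J Rt Wt \<longleftrightarrow>
     (\<forall>t\<ge>0. (Rt has_vector_derivative (Rt t ** hat (Wt t))) (at t within {0..})
          \<and> (Wt has_vector_derivative (matrix_inv J *v (cross3 (J *v Wt t) (Wt t)))) (at t within {0..}))"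

definition target_set :: "mat3 \<Rightarrow> mat3 \<Rightarrow> vec3 \<Rightarrow> (mat3 \<times> vec3) set" where
  "target_set J R0 W0 = {(R, W). rotation_matrix R \<and> energy J W = energy J W0
                                 \<and> angmom J R W = angmom J R0 W0}"

end

theory Submission imports Defs begin

lemma scalar_T_sign:
  fixes l E0 k a e x :: real
  assumes l: "l > 0" and E0: "E0 > 0" and k: "k > 0" and a: "a > 0"
    and e: "e \<noteq> 0" "\<bar>e\<bar> \<le> 1" "\<bar>e\<bar> \<le> E0/2" "\<bar>e\<bar> \<le> l / (2*k)"
    and x: "\<bar>x\<bar> \<le> 1/2" "x * (1 + x) = 2 * a * e * (E0 + e)"
  shows "2*l*e + 2*l*(E0+e)*x + 4*k*e*(E0+e) + 2*k^2*e^2*(E0+e)/(l*(1+x)) \<noteq> 0"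
proof -
  define E where "E = E0 + e"
  have Epos: "E > 0" using e E0 by (simp add: E_def)
  have x1: "1 + x \<ge> 1/2" using x by linarith
  have lx: "l * (1 + x) > 0" using l x1 by simp
  have last_nonneg: "2*k^2*e^2*E/(l*(1+x)) \<ge> 0" using Epos lx by simp
  have main: "2*l*e + 2*l*E*x + 4*k*e*E + 2*k^2*e^2*E/(l*(1+x)) \<noteq> 0"
  proof (cases "e > 0")
    case True
    have "x * (1 + x) > 0" using x(2) True a Epos by (simp add: E_def)
    then have "x > 0" using x1 by (simp add: zero_less_mult_iff) 
    then have "2*l*E*x > 0" using l Epos by simp
    moreover have "2*l*e > 0" "4*k*e*E > 0" using l True k Epos by auto
    ultimately show ?thesis using last_nonneg by linarith
  next
    case False
    then have en: "e < 0" using e(1) by simp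
    have "x * (1 + x) < 0" using x(2) en a Epos by (simp add: E_def mult_pos_neg mult_neg_pos)
    then have "x < 0" using x1 by (simp add: mult_less_0_iff)
    then have t2: "2*l*E*x < 0" using l Epos by (simp add: mult_pos_neg)
    have t1: "2*l*e < 0" using l en by (simp add: mult_pos_neg)
    have q: "k * \<bar>e\<bar> / (l * (1 + x)) \<le> 1"
    proof -
      have "k * \<bar>e\<bar> \<le> l / 2" using e(4) k by (simp add: field_simps)
      also have "\<dots> \<le> l * (1 + x)" using l x1 by simp
      finally show ?thesis using lx by simp
    qed
    have "2*k^2*e^2*E/(l*(1+x)) = 2*k*\<bar>e\<bar>*E * (k * \<bar>e\<bar> / (l * (1 + x)))"
      by (simp add: power2_eq_square abs_mult_self_eq)
    also have "\<dots> \<le> 2*k*\<bar>e\<bar>*E * 1"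
      by (rule mult_left_mono[OF q]) (use k Epos in simp)
    finally have "2*k^2*e^2*E/(l*(1+x)) \<le> 2*k*\<bar>e\<bar>*E" by simp
    moreover have "4*k*e*E = - 4*k*\<bar>e\<bar>*E" using en by simp
    moreover have "2*k*\<bar>e\<bar>*E > 0" using k Epos en by (intro mult_pos_pos) auto
    ultimately show ?thesis using t1 t2 by linarith
  qed
  then show ?thesis by (simp add: E_def)
qed

lemma tri4: "\<bar>(A::real)+B+C+D\<bar> \<le> \<bar>A\<bar>+\<bar>B\<bar>+\<bar>C\<bar>+\<bar>D\<bar>" by arith

lemma scalar_T_bound:
  fixes l E0 k a e x :: real
  assumes l: "l > 0" and E0: "E0 > 0" and k: "k > 0" and a: "a > 0"
    and e: "\<bar>e\<bar> \<le> 1" "\<bar>e\<bar> \<le> E0/2"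
    and x: "\<bar>x\<bar> \<le> 1/2" "x * (1 + x) = 2 * a * e * (E0 + e)"
  shows "\<bar>2*l*e + 2*l*(E0+e)*x + 4*k*e*(E0+e) + 2*k^2*e^2*(E0+e)/(l*(1+x))\<bar>
     \<le> (2*l + 8*l*a*(E0+1)^2 + 4*k*(E0+1) + 4*k^2*(E0+1)/l) * \<bar>e\<bar>"
proof -
  define E where "E = E0 + e"
  have Epos: "E > 0" and Ele: "E \<le> E0 + 1" using e E0 by (auto simp: E_def)
  have x1: "1 + x \<ge> 1/2" using x by linarith
  have lx: "l * (1 + x) > 0" using l x1 by simp
  have xb: "\<bar>x\<bar> \<le> 4 * a * \<bar>e\<bar> * (E0+1)"
  proof -
    have "\<bar>x\<bar> * (1/2) \<le> \<bar>x\<bar> * (1 + x)" using x1 by (intro mult_left_mono) auto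
    also have "\<dots> = \<bar>x * (1 + x)\<bar>" using x1 by (simp add: abs_mult)
    also have "\<dots> = 2 * a * \<bar>e\<bar> * E" using x(2) a Epos by (simp add: abs_mult E_def)
    also have "\<dots> \<le> 2 * a * \<bar>e\<bar> * (E0+1)" using Ele a by (intro mult_left_mono) auto
    finally show ?thesis by simp
  qed
  have b1: "\<bar>2*l*e\<bar> = 2*l*\<bar>e\<bar>" using l by (simp add: abs_mult)
  have b2: "\<bar>2*l*E*x\<bar> \<le> 8*l*a*(E0+1)^2 * \<bar>e\<bar>"
  proof -
    have "\<bar>2*l*E*x\<bar> = 2*l*E*\<bar>x\<bar>" using l Epos by (simp add: abs_mult)
    also have "\<dots> \<le> 2*l*(E0+1)*(4 * a * \<bar>e\<bar> * (E0+1))"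
      using l Epos Ele xb by (intro mult_mono) auto
    also have "\<dots> = 8*l*a*(E0+1)^2 * \<bar>e\<bar>" by (simp add: power2_eq_square algebra_simps)
    finally show ?thesis .
  qed
  have b3: "\<bar>4*k*e*E\<bar> \<le> 4*k*(E0+1)*\<bar>e\<bar>"
  proof -
    have "\<bar>4*k*e*E\<bar> = 4*k*\<bar>e\<bar>*E" using k Epos by (simp add: abs_mult)
    also have "\<dots> \<le> 4*k*\<bar>e\<bar>*(E0+1)" using k Ele by (intro mult_left_mono) auto
    finally show ?thesis by (simp add: mult_ac)
  qed
  have b4: "\<bar>2*k^2*e^2*E/(l*(1+x))\<bar> \<le> 4*k^2*(E0+1)/l * \<bar>e\<bar>"
  proof -
    have nn: "2*k^2*e^2*E/(l*(1+x)) \<ge> 0" using Epos lx by simp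
    have "2*k^2*e^2*E/(l*(1+x)) \<le> 2*k^2*e^2*E/(l*(1/2))"
      using lx l x1 Epos by (intro divide_left_mono mult_left_mono mult_pos_pos) auto
    also have "\<dots> = 4*k^2*E/l * (\<bar>e\<bar> * \<bar>e\<bar>)" using l by (simp add: field_simps power2_eq_square)
    also have "\<dots> \<le> 4*k^2*(E0+1)/l * (\<bar>e\<bar> * 1)"
      using e Ele l k by (intro mult_mono divide_right_mono mult_left_mono) auto
    finally have "2*k^2*e^2*E/(l*(1+x)) \<le> 4*k^2*(E0+1)/l * \<bar>e\<bar>" by simp
    then show ?thesis using nn by (simp only: abs_of_nonneg)
  qed
  have "\<bar>2*l*e + 2*l*E*x + 4*k*e*E + 2*k^2*e^2*E/(l*(1+x))\<bar>
     \<le> \<bar>2*l*e\<bar> + \<bar>2*l*E*x\<bar> + \<bar>4*k*e*E\<bar> + \<bar>2*k^2*e^2*E/(l*(1+x))\<bar>" by (rule tri4)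
  also have "\<dots> \<le> (2*l + 8*l*a*(E0+1)^2 + 4*k*(E0+1) + 4*k^2*(E0+1)/l) * \<bar>e\<bar>"
    using b1 b2 b3 b4 by (simp add: algebra_simps)
  finally show ?thesis by (simp add: E_def)
qed

lemma scalar_main:
  fixes l E0 k a P :: real
  assumes l: "l > 0" and E0: "E0 > 0" and k: "k > 0" and a: "a > 0"
  shows "\<exists>\<delta>>0. \<forall>e x. 0 < \<bar>e\<bar> \<and> \<bar>e\<bar> \<le> \<delta> \<and> \<bar>x\<bar> \<le> 1/2 \<and> x * (1 + x) = 2 * a * e * (E0 + e)
      \<and> P = 2*l*(E0+e)*(1+x) + 4*k*e*(E0+e) + 2*k^2*e^2*(E0+e)/(l*(1+x)) \<longrightarrow> False"
proof -
  define C where "C = 2*l + 8*l*a*(E0+1)^2 + 4*k*(E0+1) + 4*k^2*(E0+1)/l"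
  have Cpos: "C > 0" unfolding C_def using l a k E0 by (intro add_pos_nonneg) auto
  define d where "d = 2*l*E0 - P"
  define \<delta>0 where "\<delta>0 = min 1 (min (E0/2) (l / (2*k)))"
  define \<delta> where "\<delta> = (if d = 0 then \<delta>0 else min \<delta>0 (\<bar>d\<bar> / (2*C)))"
  have d0: "\<delta>0 > 0" using E0 l k by (simp add: \<delta>0_def)
  have dpos: "\<delta> > 0" using d0 Cpos by (simp add: \<delta>_def)
  have "\<forall>e x. 0 < \<bar>e\<bar> \<and> \<bar>e\<bar> \<le> \<delta> \<and> \<bar>x\<bar> \<le> 1/2 \<and> x * (1 + x) = 2 * a * e * (E0 + e)
      \<and> P = 2*l*(E0+e)*(1+x) + 4*k*e*(E0+e) + 2*k^2*e^2*(E0+e)/(l*(1+x)) \<longrightarrow> False"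
  proof (intro allI impI)
    fix e x
    assume h: "0 < \<bar>e\<bar> \<and> \<bar>e\<bar> \<le> \<delta> \<and> \<bar>x\<bar> \<le> 1/2 \<and> x * (1 + x) = 2 * a * e * (E0 + e)
      \<and> P = 2*l*(E0+e)*(1+x) + 4*k*e*(E0+e) + 2*k^2*e^2*(E0+e)/(l*(1+x))"
    have ed0: "\<bar>e\<bar> \<le> \<delta>0" using h by (auto simp: \<delta>_def split: if_splits)
    then have e1: "\<bar>e\<bar> \<le> 1" "\<bar>e\<bar> \<le> E0/2" "\<bar>e\<bar> \<le> l / (2*k)" by (auto simp: \<delta>0_def)
    define T where "T = 2*l*e + 2*l*(E0+e)*x + 4*k*e*(E0+e) + 2*k^2*e^2*(E0+e)/(l*(1+x))"
    have TP: "T = - d" using h by (simp add: T_def d_def algebra_simps)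
    have Tne: "T \<noteq> 0" unfolding T_def
      using scalar_T_sign[OF l E0 k a _ e1] h by auto
    have Tb: "\<bar>T\<bar> \<le> C * \<bar>e\<bar>" unfolding T_def C_def
      using scalar_T_bound[OF l E0 k a e1(1,2)] h by auto
    have dne: "d \<noteq> 0" using Tne TP by simp
    then have "\<bar>e\<bar> \<le> \<bar>d\<bar> / (2*C)" using h by (simp add: \<delta>_def)
    then have "C * \<bar>e\<bar> \<le> \<bar>d\<bar> / 2" using Cpos by (simp add: field_simps)
    then have "\<bar>d\<bar> \<le> \<bar>d\<bar> / 2" using Tb TP by simp
    then show False using dne by simp
  qed
  then show ?thesis using dpos by blast
qed



lemma inner_mat3: "inner (A::real^3^3) B = (\<Sum>i\<in>UNIV. \<Sum>j\<in>UNIV. A$i$j * B$i$j)"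
  by (simp add: inner_vec_def)

lemma frob_eq_norm: "frob A = norm A"
  unfolding frob_def norm_eq_sqrt_inner
  by (simp add: inner_vec_def trace_def matrix_matrix_mult_def transpose_def sum_3 power2_eq_square)

lemma hat_mult: "hat W *v a = cross3 W a"
  by (simp add: hat_def cross3_simps vec_eq_iff forall_3 matrix_vector_mult_def sum_3 vector_3 algebra_simps)

lemma inner_sym_hat: assumes "transpose S = S" shows "inner S (hat W) = 0"
proof -
  have s: "S$i$j = S$j$i" for i j proof -
    have "transpose S $ j $ i = S $ j $ i" using assms by simp
    then show ?thesis by (simp add: transpose_def)
  qed
  have "inner S (hat W) = S$1$2 * (-W$3) + S$1$3 * W$2 + S$2$1 * W$3 + S$2$3 * (-W$1) + S$3$1 * (-W$2) + S$3$2 * W$1"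
    by (simp add: inner_vec_def hat_def sum_3 vector_3)
  also have "\<dots> = 0" using s[of 1 2] s[of 1 3] s[of 2 3] by (simp add: algebra_simps)
  finally show ?thesis .
qed

lemma inner_mm1: "inner (A::real^3^3) ((B::real^3^3) ** C) = inner (transpose B ** A) C"
  by (simp add: inner_vec_def matrix_matrix_mult_def transpose_def sum_3 algebra_simps)

lemma inner_mm2: "inner (A::real^3^3) ((B::real^3^3) ** C) = inner (A ** transpose C) B"
  by (simp add: inner_vec_def matrix_matrix_mult_def transpose_def sum_3 algebra_simps)

lemma inner_transpose: "inner (transpose (A::real^3^3)) (transpose B) = inner A B"
  by (simp add: inner_vec_def transpose_def sum_3 algebra_simps)

lemma inner_mv: "inner (a::real^3) ((M::real^3^3) *v b) = inner (transpose M *v a) b"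
  by (simp add: inner_vec_def matrix_vector_mult_def transpose_def sum_3 algebra_simps)

lemma inner_outer: "inner (outer p u) (A::real^3^3) = inner p (A *v u)"
  by (simp add: inner_vec_def matrix_vector_mult_def outer_def sum_3 algebra_simps)

lemma bilinear_mm: "bilinear (\<lambda>A B::real^'n^'n. A ** B)"
  unfolding bilinear_def linear_iff
  by (auto simp: vec_eq_iff matrix_matrix_mult_def sum.distrib sum_distrib_left algebra_simps)

lemma bbl_mm: "bounded_bilinear (\<lambda>A B::real^'n^'n. A ** B)"
  using bilinear_mm bilinear_conv_bounded_bilinear by blast

lemma bilinear_mv: "bilinear (\<lambda>(A::real^'n^'n) b. A *v b)"
  unfolding bilinear_def linear_iff
  by (auto simp: vec_eq_iff matrix_vector_mult_def sum.distrib sum_distrib_left algebra_simps)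

lemma bbl_mv: "bounded_bilinear (\<lambda>(A::real^'n^'n) b. A *v b)"
  using bilinear_mv bilinear_conv_bounded_bilinear by blast

lemma bl_transpose: "bounded_linear (transpose :: real^'n^'n \<Rightarrow> _)"
proof -
  have "linear (transpose :: real^'n^'n \<Rightarrow> _)"
    unfolding linear_iff by (auto simp: vec_eq_iff transpose_def)
  then show ?thesis using linear_conv_bounded_linear by blast
qed

definition Xm :: "mat3 \<Rightarrow> mat3" where "Xm R = transpose R ** R - mat 1"
definition pp :: "mat3 \<Rightarrow> mat3 \<Rightarrow> vec3 \<Rightarrow> mat3 \<Rightarrow> vec3 \<Rightarrow> vec3" where
  "pp J R0 W0 R W = angmom J R W - angmom J R0 W0"
definition ee :: "mat3 \<Rightarrow> vec3 \<Rightarrow> vec3 \<Rightarrow> real" where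
  "ee J W0 W = energy J W - energy J W0"
definition GR where
  "GR J k0 k2 R0 W0 R W = k0 *\<^sub>R (R ** Xm R) + k2 *\<^sub>R outer (pp J R0 W0 R W) (J *v W)"
definition GW where
  "GW J k1 k2 R0 W0 R W = (k1 * ee J W0 W) *\<^sub>R (J *v W) + k2 *\<^sub>R (J *v (transpose R *v pp J R0 W0 R W))"

lemma lyapV_alt: "lyapV J k0 k1 k2 R0 W0 R W =
   k0 / 4 * (norm (Xm R))\<^sup>2 + k1 / 2 * (ee J W0 W)\<^sup>2 + k2 / 2 * (norm (pp J R0 W0 R W))\<^sup>2"
  by (simp add: lyapV_def frob_eq_norm Xm_def ee_def pp_def)

lemma Xm_sym: "transpose (Xm R) = Xm R"
  by (simp add: Xm_def transpose_def vec_eq_iff matrix_matrix_mult_def mat_def mult.commute)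

lemma transpose_mm: "transpose ((A::real^3^3) ** B) = transpose B ** transpose A"
  by (simp add: matrix_transpose_mul)

lemma V_deriv:
  fixes R :: "real \<Rightarrow> mat3" and W :: "real \<Rightarrow> vec3"
  assumes dR: "(R has_vector_derivative R') (at t within S)"
    and dW: "(W has_vector_derivative W') (at t within S)"
    and J: "transpose J = J"
  shows "((\<lambda>t. lyapV J k0 k1 k2 R0 W0 (R t) (W t)) has_real_derivative
     (inner (GR J k0 k2 R0 W0 (R t) (W t)) R' + inner (GW J k1 k2 R0 W0 (R t) (W t)) W')) (at t within S)"
proof -
  define X where "X = Xm (R t)"
  define X' where "X' = transpose (R t) ** R' + transpose R' ** R t"
  define p where "p = pp J R0 W0 (R t) (W t)"
  define p' where "p' = R t *v (J *v W') + R' *v (J *v W t)"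
  define e where "e = ee J W0 (W t)"
  define e' where "e' = inner (J *v W t) W'"
  have dT: "((\<lambda>t. transpose (R t)) has_vector_derivative transpose R') (at t within S)"
    using bounded_linear.has_vector_derivative[OF bl_transpose dR] .
  have dX: "((\<lambda>t. Xm (R t)) has_vector_derivative X') (at t within S)"
    unfolding Xm_def X'_def
    using bounded_bilinear.has_vector_derivative[OF bbl_mm dT dR]
    by (subst has_vector_derivative_diff_const) simp
  have dJW: "((\<lambda>t. J *v W t) has_vector_derivative J *v W') (at t within S)"
    using bounded_bilinear.has_vector_derivative[OF bbl_mv has_vector_derivative_const dW, of J]
    by simp
  have dp: "((\<lambda>t. pp J R0 W0 (R t) (W t)) has_vector_derivative p') (at t within S)"
    unfolding pp_def angmom_def p'_def
    using bounded_bilinear.has_vector_derivative[OF bbl_mv dR dJW]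
    by (subst has_vector_derivative_diff_const) simp
  have de: "((\<lambda>t. ee J W0 (W t)) has_vector_derivative e') (at t within S)"
  proof -
    have "((\<lambda>t. inner (W t) (J *v W t)) has_vector_derivative (inner (W t) (J *v W') + inner W' (J *v W t))) (at t within S)"
      using bounded_bilinear.has_vector_derivative[OF bounded_bilinear_inner dW dJW] .
    moreover have "inner (W t) (J *v W') = inner (J *v W t) W'"
      using inner_mv[of "W t" J W'] J by (simp add: inner_commute)
    ultimately have "((\<lambda>t. inner (W t) (J *v W t)) has_vector_derivative 2 * e') (at t within S)"
      by (simp add: e'_def inner_commute)
    then have "((\<lambda>t. inner (W t) (J *v W t)) has_real_derivative 2 * e') (at t within S)"
      by (simp add: has_real_derivative_iff_has_vector_derivative)
    then have "((\<lambda>t. (1/2) * inner (W t) (J *v W t)) has_real_derivative (1/2) * (2 * e')) (at t within S)"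
      by (rule DERIV_cmult)
    then have "((\<lambda>t. (1/2) * inner (W t) (J *v W t)) has_vector_derivative e') (at t within S)"
      by (simp add: has_real_derivative_iff_has_vector_derivative)
    then show ?thesis unfolding ee_def energy_def
      by (subst has_vector_derivative_diff_const) simp
  qed
  have sq: "((\<lambda>t. (norm (f t))\<^sup>2) has_real_derivative 2 * inner (f t) f') (at t within S)"
    if "(f has_vector_derivative f') (at t within S)" for f :: "real \<Rightarrow> 'z::real_inner" and f'
  proof -
    have "((\<lambda>t. inner (f t) (f t)) has_vector_derivative (inner (f t) f' + inner f' (f t))) (at t within S)"
      using bounded_bilinear.has_vector_derivative[OF bounded_bilinear_inner that that] .
    then show ?thesis
      by (simp add: power2_norm_eq_inner has_real_derivative_iff_has_vector_derivative inner_commute)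
  qed
  have sqe: "((\<lambda>t. (ee J W0 (W t))\<^sup>2) has_real_derivative 2 * e * e') (at t within S)"
    using de unfolding has_real_derivative_iff_has_vector_derivative[symmetric] e_def
    by (auto intro!: derivative_eq_intros)
  have D: "((\<lambda>t. lyapV J k0 k1 k2 R0 W0 (R t) (W t)) has_real_derivative
       k0/4 * (2 * inner X X') + k1/2 * (2 * e * e') + k2/2 * (2 * inner p p')) (at t within S)"
    unfolding lyapV_alt X_def p_def
    by (intro DERIV_add DERIV_cmult sq[OF dX] sq[OF dp] sqe)
  have i1: "inner X X' = 2 * inner (R t ** X) R'"
  proof -
    have a: "inner X (transpose (R t) ** R') = inner (R t ** X) R'"
      by (simp add: inner_mm1)
    have "inner X (transpose R' ** R t) = inner (transpose X) (transpose (transpose R' ** R t))"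
      by (simp add: inner_transpose)
    also have "\<dots> = inner X (transpose (R t) ** R')"
      by (simp add: X_def Xm_sym transpose_mm)
    finally show ?thesis using a by (simp add: X'_def inner_add_right)
  qed
  have i2: "inner p p' = inner (outer p (J *v W t)) R' + inner (J *v (transpose (R t) *v p)) W'"
  proof -
    have "inner p (R t *v (J *v W')) = inner (transpose (R t) *v p) (J *v W')"
      by (rule inner_mv)
    also have "\<dots> = inner (J *v (transpose (R t) *v p)) W'"
      using inner_mv[of "transpose (R t) *v p" J W'] J by (simp add: inner_commute)
    finally show ?thesis by (simp add: p'_def inner_add_right inner_outer)
  qed
  show ?thesis
    using D unfolding i1 i2
    by (simp add: GR_def GW_def inner_add_left X_def p_def e_def e'_def algebra_simps inner_commute)
qed

lemma inv_mat: "invertible (A::real^'n^'n) \<Longrightarrow> A ** matrix_inv A = mat 1 \<and> matrix_inv A ** A = mat 1"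
  unfolding matrix_inv_def invertible_def by (rule someI_ex)

lemma invertible_ker: "invertible (A::real^'n^'n) \<longleftrightarrow> (\<forall>x. A *v x = 0 \<longrightarrow> x = 0)"
  using invertible_left_inverse matrix_left_invertible_ker by blast

lemma spd_invertible: "sym_pos_def_mat J \<Longrightarrow> invertible J"
  unfolding invertible_ker sym_pos_def_mat_def
  by (metis inner_zero_right order_less_irrefl)

lemma inner_J_inv:
  assumes "transpose J = J" "invertible J"
  shows "inner (J *v a) (matrix_inv J *v z) = inner a (z::real^3)"
proof -
  have "inner (J *v a) (matrix_inv J *v z) = inner a (transpose J *v (matrix_inv J *v z))"
    using inner_mv[of "J *v a" "matrix_inv J" z] inner_mv[of a J]
    by (metis inner_commute inner_mv transpose_transpose)
  also have "\<dots> = inner a z" using assms inv_mat[of J]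
    by (simp add: matrix_vector_mul_assoc del: transpose_matrix_vector)
  finally show ?thesis .
qed

lemma mm_add_rdistrib: "((A::real^'n^'n) + B) ** C = A ** C + B ** C"
  by (simp add: vec_eq_iff matrix_matrix_mult_def sum.distrib algebra_simps)

lemma transpose_add: "transpose ((A::real^'n^'n) + B) = transpose A + transpose B"
  by (simp add: vec_eq_iff transpose_def)

lemma mv_neg: "(A::real^'n^'m) *v (- x) = - (A *v x)"
  by (simp add: vec_eq_iff matrix_vector_mult_def sum_negf)

lemma free_orth:
  assumes J: "transpose J = J" "invertible J"
  shows "inner (GR J k0 k2 R0 W0 R W) (R ** hat W)
       + inner (GW J k1 k2 R0 W0 R W) (matrix_inv J *v cross3 (J *v W) W) = 0"
proof -
  define X where "X = Xm R"
  define p where "p = pp J R0 W0 R W"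
  define u where "u = J *v W"
  have M: "transpose R ** R = X + mat 1" by (simp add: X_def Xm_def)
  have a1: "inner (R ** X) (R ** hat W) = 0"
  proof -
    have "inner (R ** X) (R ** hat W) = inner ((transpose R ** R) ** X) (hat W)"
      by (simp add: inner_mm1 matrix_mul_assoc)
    also have "\<dots> = 0"
    proof (rule inner_sym_hat)
      have t: "transpose X = X" by (simp add: X_def Xm_sym)
      show "transpose ((transpose R ** R) ** X) = (transpose R ** R) ** X"
        unfolding M by (simp add: transpose_mm t matrix_add_ldistrib mm_add_rdistrib transpose_add)
    qed
    finally show ?thesis .
  qed
  have a2: "inner (outer p u) (R ** hat W) = inner p (R *v cross3 W u)"
    by (simp add: inner_outer hat_mult matrix_vector_mul_assoc[symmetric])
  have a3: "inner u (matrix_inv J *v cross3 u W) = 0"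
    unfolding u_def using inner_J_inv[OF J, of W] by (simp add: dot_cross_self)
  have a4: "inner (J *v (transpose R *v p)) (matrix_inv J *v cross3 u W) = inner p (R *v cross3 u W)"
    using inner_J_inv[OF J] inner_mv[of "transpose R *v p" R] inner_mv
    by (metis inner_commute transpose_transpose)
  have "cross3 u W = - cross3 W u" by (rule cross_skew)
  then show ?thesis
    using a1 a2 a3 a4
    by (simp add: GR_def GW_def inner_add_left X_def p_def u_def mv_neg inner_minus_right
         del: transpose_matrix_vector)
qed

lemma ctrl_R_eq: "transpose J = J \<Longrightarrow>
   ctrl_R J k0 k1 k2 R0 W0 R W = R ** hat W - GR J k0 k2 R0 W0 R W"
  unfolding ctrl_R_def GR_def Xm_def pp_def
  by (metis (no_types, lifting) diff_diff_eq vector_transpose_matrix)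

lemma ctrl_W_eq: "ctrl_W J k0 k1 k2 R0 W0 R W = matrix_inv J *v cross3 (J *v W) W - GW J k1 k2 R0 W0 R W"
  unfolding ctrl_W_def GW_def ee_def pp_def
  by (simp add: algebra_simps del: transpose_matrix_vector)

lemma V_deriv_ctrl:
  assumes J: "sym_pos_def_mat J" and sol: "ctrl_solution J k0 k1 k2 R0 W0 Rt Wt" and t: "t \<ge> 0"
  shows "((\<lambda>t. lyapV J k0 k1 k2 R0 W0 (Rt t) (Wt t)) has_real_derivative
     - ((norm (GR J k0 k2 R0 W0 (Rt t) (Wt t)))\<^sup>2 + (norm (GW J k1 k2 R0 W0 (Rt t) (Wt t)))\<^sup>2)) (at t within {0..})"
proof -
  have Js: "transpose J = J" and Ji: "invertible J"
    using J spd_invertible by (auto simp: sym_pos_def_mat_def)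
  have d: "(Rt has_vector_derivative ctrl_R J k0 k1 k2 R0 W0 (Rt t) (Wt t)) (at t within {0..})"
     "(Wt has_vector_derivative ctrl_W J k0 k1 k2 R0 W0 (Rt t) (Wt t)) (at t within {0..})"
    using sol t unfolding ctrl_solution_def by auto
  from V_deriv[OF d Js, of k0 k1 k2 R0 W0]
  show ?thesis
    unfolding ctrl_R_eq[OF Js] ctrl_W_eq
  proof (rule DERIV_cong)
    show "inner (GR J k0 k2 R0 W0 (Rt t) (Wt t)) (Rt t ** hat (Wt t) - GR J k0 k2 R0 W0 (Rt t) (Wt t)) +
    inner (GW J k1 k2 R0 W0 (Rt t) (Wt t)) (matrix_inv J *v cross3 (J *v Wt t) (Wt t) - GW J k1 k2 R0 W0 (Rt t) (Wt t)) =
    - ((norm (GR J k0 k2 R0 W0 (Rt t) (Wt t)))\<^sup>2 + (norm (GW J k1 k2 R0 W0 (Rt t) (Wt t)))\<^sup>2)"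
      using free_orth[OF Js Ji, of k0 k2 R0 W0 "Rt t" "Wt t" k1]
      by (simp add: inner_diff_right power2_norm_eq_inner algebra_simps)
  qed
qed

lemma V_deriv_free:
  assumes J: "sym_pos_def_mat J" and sol: "free_solution J Rt Wt" and t: "t \<ge> 0"
  shows "((\<lambda>t. lyapV J k0 k1 k2 R0 W0 (Rt t) (Wt t)) has_real_derivative 0) (at t within {0..})"
proof -
  have Js: "transpose J = J" and Ji: "invertible J"
    using J spd_invertible by (auto simp: sym_pos_def_mat_def)
  have d: "(Rt has_vector_derivative (Rt t ** hat (Wt t))) (at t within {0..})"
     "(Wt has_vector_derivative (matrix_inv J *v (cross3 (J *v Wt t) (Wt t)))) (at t within {0..})"
    using sol t unfolding free_solution_def by auto
  from V_deriv[OF d Js, of k0 k1 k2 R0 W0]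
  show ?thesis
    using free_orth[OF Js Ji, of k0 k2 R0 W0 "Rt t" "Wt t" k1] by simp
qed

lemma nonincr:
  fixes f :: "real \<Rightarrow> real"
  assumes d: "\<And>t. t \<ge> 0 \<Longrightarrow> (f has_real_derivative D t) (at t within {0..})"
    and n: "\<And>t. t \<ge> 0 \<Longrightarrow> D t \<le> 0" and "0 \<le> a" "a \<le> b"
  shows "f b \<le> f a"
proof -
  have "\<exists>x\<in>{a..b}. f b - f a = D x * (b - a)"
  proof (rule mvt_very_simple[of a b f "\<lambda>x h. D x * h"])
    fix x assume "a \<le> x" "x \<le> b"
    then have "(f has_real_derivative D x) (at x within {0..})" using d assms(3) by auto
    then have "(f has_real_derivative D x) (at x within {a..b})"
      by (rule has_field_derivative_subset) (use assms(3) in auto)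
    then show "(f has_derivative (\<lambda>h. D x * h)) (at x within {a..b})"
      by (simp add: has_field_derivative_def)
  qed fact
  then obtain x where "x \<in> {a..b}" "f b - f a = D x * (b - a)" by blast
  moreover have "D x \<le> 0" using n \<open>x \<in> {a..b}\<close> assms(3) by auto
  moreover have "D x * (b - a) \<le> 0" using \<open>D x \<le> 0\<close> assms(4) by (intro mult_nonpos_nonneg) auto
  ultimately show ?thesis by linarith
qed

lemma cont_nth: "continuous F f \<Longrightarrow> continuous F (\<lambda>x. f x $ i)"
  unfolding continuous_def by (rule tendsto_vec_nth)

lemma cont_det: "continuous F f \<Longrightarrow> continuous F (\<lambda>x. det (f x :: real^3^3))"
  unfolding det_3 by (intro continuous_intros cont_nth)

lemma cont_Xm: "continuous F f \<Longrightarrow> continuous F (\<lambda>x. Xm (f x))"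
  unfolding Xm_def
  by (intro continuous_intros bounded_bilinear.continuous[OF bbl_mm] bounded_linear.continuous[OF bl_transpose])

lemma cont_pp: "continuous F f \<Longrightarrow> continuous F g \<Longrightarrow> continuous F (\<lambda>x. pp J R0 W0 (f x) (g x))"
  unfolding pp_def angmom_def
  by (intro continuous_intros bounded_bilinear.continuous[OF bbl_mv])

lemma cont_ee: "continuous F g \<Longrightarrow> continuous F (\<lambda>x. ee J W0 (g x))"
  unfolding ee_def energy_def
  by (intro continuous_intros bounded_bilinear.continuous[OF bbl_mv])

lemma cont_outer: "continuous F f \<Longrightarrow> continuous F g \<Longrightarrow> continuous F (\<lambda>x. outer (f x) (g x))"
proof -
  have "bilinear outer" unfolding bilinear_def linear_iff
    by (auto simp: vec_eq_iff outer_def algebra_simps)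
  then have "bounded_bilinear outer" using bilinear_conv_bounded_bilinear by blast
  then show "continuous F f \<Longrightarrow> continuous F g \<Longrightarrow> continuous F (\<lambda>x. outer (f x) (g x))"
    using bounded_bilinear.continuous by blast
qed

lemma cont_V: "continuous F f \<Longrightarrow> continuous F g \<Longrightarrow> continuous F (\<lambda>x. lyapV J k0 k1 k2 R0 W0 (f x) (g x))"
  unfolding lyapV_alt by (intro continuous_intros cont_Xm cont_ee cont_pp)

lemma cont_G: "continuous F f \<Longrightarrow> continuous F g \<Longrightarrow>
   continuous F (\<lambda>x. (norm (GR J k0 k2 R0 W0 (f x) (g x)))\<^sup>2 + (norm (GW J k1 k2 R0 W0 (f x) (g x)))\<^sup>2)"
  unfolding GR_def GW_def
  by (intro continuous_intros cont_Xm cont_ee cont_pp cont_outer bounded_bilinear.continuous[OF bbl_mv]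
     bounded_bilinear.continuous[OF bbl_mm] bounded_linear.continuous[OF bl_transpose])

lemma V_nonneg: "k0 \<ge> 0 \<Longrightarrow> k1 \<ge> 0 \<Longrightarrow> k2 \<ge> 0 \<Longrightarrow> 0 \<le> lyapV J k0 k1 k2 R0 W0 R W"
  unfolding lyapV_alt by (intro add_nonneg_nonneg mult_nonneg_nonneg) auto

lemma V_zero_iff: "k0 > 0 \<Longrightarrow> k1 > 0 \<Longrightarrow> k2 > 0 \<Longrightarrow>
   lyapV J k0 k1 k2 R0 W0 R W = 0 \<longleftrightarrow> Xm R = 0 \<and> ee J W0 W = 0 \<and> pp J R0 W0 R W = 0"
proof -
  assume k: "k0 > 0" "k1 > 0" "k2 > 0"
  have a: "0 \<le> k0 / 4 * (norm (Xm R))\<^sup>2" "0 \<le> k1 / 2 * (ee J W0 W)\<^sup>2" "0 \<le> k2 / 2 * (norm (pp J R0 W0 R W))\<^sup>2"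
    using k by auto
  show ?thesis unfolding lyapV_alt
    using a k by (auto simp: add_nonneg_eq_0_iff)
qed

lemma Xm_zero_iff: "Xm R = 0 \<longleftrightarrow> orthogonal_matrix R"
  by (simp add: Xm_def orthogonal_matrix)

lemma rot_iff: "rotation_matrix (R::mat3) \<longleftrightarrow> det R > 0 \<and> orthogonal_matrix R"
  using det_orthogonal_matrix[of R] by (auto simp: rotation_matrix_def)

lemma target_eq:
  assumes "k0 > 0" "k1 > 0" "k2 > 0"
  shows "{p \<in> dom_U. lyapV J k0 k1 k2 R0 W0 (fst p) (snd p) = 0} = target_set J R0 W0"
  using V_zero_iff[OF assms]
  by (auto simp: dom_U_def target_set_def Xm_zero_iff ee_def pp_def rot_iff)

lemma mv_bound: "norm ((A::real^3^3) *v v) \<le> norm A * norm v"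
proof -
  have "(norm (A *v v))\<^sup>2 = (\<Sum>i\<in>UNIV. (inner (A$i) v)\<^sup>2)"
    unfolding power2_norm_eq_inner by (simp add: inner_vec_def matrix_vector_mult_def power2_eq_square)
  also have "\<dots> \<le> (\<Sum>i\<in>UNIV. (norm (A$i))\<^sup>2 * (norm v)\<^sup>2)"
  proof (rule sum_mono)
    fix i
    have "\<bar>inner (A$i) v\<bar> \<le> norm (A$i) * norm v" by (rule Cauchy_Schwarz_ineq2)
    then have "\<bar>inner (A$i) v\<bar>\<^sup>2 \<le> (norm (A$i) * norm v)\<^sup>2"
      by (rule power_mono) simp
    then show "(inner (A$i) v)\<^sup>2 \<le> (norm (A$i))\<^sup>2 * (norm v)\<^sup>2"
      by (simp add: power_mult_distrib)
  qed
  also have "\<dots> = (norm A * norm v)\<^sup>2"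
    by (simp add: power_mult_distrib sum_distrib_right[symmetric] power2_norm_eq_inner inner_vec_def)
  finally show ?thesis
    by (rule power2_le_imp_le) simp
qed

lemma small_X_M_inj:
  assumes "norm (Xm R) < 1" "(transpose R ** R) *v v = 0" shows "v = 0"
proof (rule ccontr)
  assume v: "v \<noteq> 0"
  have "transpose R ** R = Xm R + mat 1" by (simp add: Xm_def)
  then have "Xm R *v v + v = 0" using assms(2)
    by (simp add: matrix_vector_mult_add_rdistrib del: transpose_matrix_vector)
  then have "Xm R *v v = - v" by (simp add: eq_neg_iff_add_eq_0)
  then have "norm v \<le> norm (Xm R) * norm v" using mv_bound[of "Xm R" v] by simp
  moreover have "norm (Xm R) * norm v < norm v" using assms(1) v by simp
  ultimately show False by simp
qed

lemma small_X_inv: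
  assumes "norm (Xm R) < 1" shows "invertible R" "det R \<noteq> 0"
proof -
  have "\<forall>v. R *v v = 0 \<longrightarrow> v = 0"
  proof (intro allI impI)
    fix v assume "R *v v = 0"
    then have "(transpose R ** R) *v v = 0"
      by (metis matrix_vector_mul_assoc matrix_vector_mult_0_right)
    then show "v = 0" using small_X_M_inj[OF assms] by blast
  qed
  then show "invertible R" using invertible_ker by blast
  then show "det R \<noteq> 0" using invertible_det_nz by blast
qed

lemma pd_bound:
  assumes "sym_pos_def_mat J"
  shows "\<exists>m>0. \<forall>v. inner v (J *v v) \<ge> m * (norm v)\<^sup>2"
proof -
  have cont: "continuous_on (sphere 0 1) (\<lambda>v::real^3. inner v (J *v v))"
    by (intro continuous_intros bounded_bilinear.continuous_on[OF bbl_mv])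
  have "sphere (0::real^3) 1 \<noteq> {}"
    by (metis norm_axis_1 mem_sphere_0 empty_iff)
  then obtain v0 where v0: "v0 \<in> sphere 0 1" "\<forall>y\<in>sphere 0 1. inner v0 (J *v v0) \<le> inner y (J *v y)"
    using continuous_attains_inf[OF compact_sphere _ cont] by blast
  define m where "m = inner v0 (J *v v0)"
  have "v0 \<noteq> 0" using v0(1) by auto
  then have mpos: "m > 0" using assms unfolding sym_pos_def_mat_def m_def by blast
  have "inner v (J *v v) \<ge> m * (norm v)\<^sup>2" for v
  proof (cases "v = 0")
    case True then show ?thesis by simp
  next
    case False
    define u where "u = (1 / norm v) *\<^sub>R v"
    have u: "u \<in> sphere 0 1" using False by (simp add: u_def)
    have vu: "v = norm v *\<^sub>R u" using False by (simp add: u_def)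
    have "inner v (J *v v) = (norm v)\<^sup>2 * inner u (J *v u)"
      by (subst (1 2) vu) (simp add: matrix_vector_mult_scaleR power2_eq_square del: transpose_matrix_vector)
    moreover have "m \<le> inner u (J *v u)" using v0(2) u m_def by blast
    ultimately show ?thesis using mult_right_mono[of m "inner u (J *v u)" "(norm v)\<^sup>2"] by (metis mult.commute zero_le_power2)
  qed
  then show ?thesis using mpos by blast
qed

lemma inner_self_trace: "inner (R::real^3^3) R = trace (transpose R ** R)"
  by (simp add: inner_vec_def trace_def matrix_matrix_mult_def transpose_def sum_3)

lemma trace_le: "trace (A::real^3^3) \<le> 3 * norm A"
proof -
  have "A$i$i \<le> norm A" for i
  proof -
    have "\<bar>A$i$i\<bar> \<le> norm (A$i)" by (rule component_le_norm_cart)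
    moreover have "norm (A$i) \<le> norm A"
    proof -
      have "(norm (A$i))\<^sup>2 \<le> (norm A)\<^sup>2"
        unfolding power2_norm_eq_inner inner_vec_def[of A A]
        by (rule member_le_sum) auto
      then show ?thesis by (rule power2_le_imp_le) simp
    qed
    ultimately show ?thesis by linarith
  qed
  then show ?thesis unfolding trace_def sum_3 by (smt (verit))
qed

lemma V_small:
  assumes k: "k0 > 0" "k1 > 0" "k2 > 0" and V: "lyapV J k0 k1 k2 R0 W0 R W \<le> c"
  shows "(norm (Xm R))\<^sup>2 \<le> 4 * c / k0" "(ee J W0 W)\<^sup>2 \<le> 2 * c / k1"
proof -
  have a: "0 \<le> k0 / 4 * (norm (Xm R))\<^sup>2" "0 \<le> k1 / 2 * (ee J W0 W)\<^sup>2" "0 \<le> k2 / 2 * (norm (pp J R0 W0 R W))\<^sup>2"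
    using k by auto
  have "k0 / 4 * (norm (Xm R))\<^sup>2 \<le> c" "k1 / 2 * (ee J W0 W)\<^sup>2 \<le> c"
    using V a unfolding lyapV_alt by linarith+
  then show "(norm (Xm R))\<^sup>2 \<le> 4 * c / k0" "(ee J W0 W)\<^sup>2 \<le> 2 * c / k1"
    using k by (simp_all add: field_simps)
qed

lemma sq_le_imp: "(x::real)\<^sup>2 \<le> a\<^sup>2 \<Longrightarrow> a \<ge> 0 \<Longrightarrow> \<bar>x\<bar> \<le> a"
  using abs_le_square_iff by (metis abs_of_nonneg)

lemma V_small2:
  assumes k: "k0 > 0" "k1 > 0" "k2 > 0" and V: "lyapV J k0 k1 k2 R0 W0 R W \<le> c"
    and c: "c \<le> k0 / 16" "c \<le> k1 * d\<^sup>2 / 2" "d \<ge> 0"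
  shows "norm (Xm R) \<le> 1/2" "\<bar>ee J W0 W\<bar> \<le> d"
proof -
  have "4 * c / k0 \<le> 1/4" using c k by (simp add: field_simps)
  then have "(norm (Xm R))\<^sup>2 \<le> (1/2)\<^sup>2"
    using V_small(1)[OF k V] by (simp add: power2_eq_square)
  then show "norm (Xm R) \<le> 1/2" using sq_le_imp by fastforce
  have "k1 * (ee J W0 W)\<^sup>2 \<le> 2 * c"
    using V_small(2)[OF k V] k by (simp add: field_simps)
  also have "\<dots> \<le> k1 * d\<^sup>2" using c by simp
  finally have "k1 * (ee J W0 W)\<^sup>2 \<le> k1 * d\<^sup>2" .
  then have "(ee J W0 W)\<^sup>2 \<le> d\<^sup>2" using k by simp
  then show "\<bar>ee J W0 W\<bar> \<le> d" using sq_le_imp c(3) by blast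
qed

lemma inner_sym: "transpose J = J \<Longrightarrow> inner (a::real^3) (J *v b) = inner (J *v a) b"
  using inner_mv[of a J b] by (simp del: transpose_matrix_vector)

lemma eig_finite:
  assumes J: "transpose J = J"
  shows "finite {l. \<exists>v::real^3. v \<noteq> 0 \<and> J *v v = l *\<^sub>R v}"
proof -
  define L where "L = {l. \<exists>v::real^3. v \<noteq> 0 \<and> J *v v = l *\<^sub>R v}"
  define f where "f l = (SOME v::real^3. v \<noteq> 0 \<and> J *v v = l *\<^sub>R v)" for l
  have f: "f l \<noteq> 0 \<and> J *v f l = l *\<^sub>R f l" if "l \<in> L" for l
    using that unfolding L_def f_def by (metis (mono_tags, lifting) mem_Collect_eq someI_ex)
  have inj: "inj_on f L"
  proof (rule inj_onI)
    fix l1 l2 assume "l1 \<in> L" "l2 \<in> L" "f l1 = f l2"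
    then have "l1 *\<^sub>R f l1 = l2 *\<^sub>R f l1" "f l1 \<noteq> 0" using f by metis+
    then show "l1 = l2" by (simp add: scaleR_cancel_right)
  qed
  have po: "pairwise orthogonal (f ` L)"
  proof (clarsimp simp: pairwise_def)
    fix l1 l2 assume h: "l1 \<in> L" "l2 \<in> L" "f l1 \<noteq> f l2"
    then have ne: "l1 \<noteq> l2" by auto
    have "l1 * inner (f l1) (f l2) = inner (J *v f l1) (f l2)" using f[OF h(1)] by simp
    also have "\<dots> = inner (f l1) (J *v f l2)" using inner_sym[OF J] by simp
    also have "\<dots> = l2 * inner (f l1) (f l2)" using f[OF h(2)] by simp
    finally have "(l1 - l2) * inner (f l1) (f l2) = 0" by (simp add: algebra_simps)
    then show "orthogonal (f l1) (f l2)" using ne by (simp add: orthogonal_def)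
  qed
  have "0 \<notin> f ` L" using f by auto
  then have "independent (f ` L)" using pairwise_orthogonal_independent po by blast
  then have "finite (f ` L)" using independent_bound by blast
  then have "finite L" using inj finite_imageD by blast
  then show ?thesis by (simp add: L_def)
qed

lemma outer_mv: "outer a b *v w = inner b w *\<^sub>R (a::real^3)"
  by (simp add: vec_eq_iff outer_def matrix_vector_mult_def inner_vec_def sum_3 algebra_simps)

lemma mm_outer: "(A::real^3^3) ** outer a b = outer (A *v a) b"
  by (simp add: vec_eq_iff outer_def matrix_vector_mult_def matrix_matrix_mult_def sum_3 algebra_simps)

lemma transpose_outer: "transpose (outer a b) = outer b (a::real^3)"
  by (simp add: vec_eq_iff outer_def transpose_def)

lemma outer_scaleR: "outer (c *\<^sub>R a) b = c *\<^sub>R outer a (b::real^3)"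
  by (simp add: vec_eq_iff outer_def)

lemma mm_scaleR: "(A::real^3^3) ** (c *\<^sub>R B) = c *\<^sub>R (A ** B)" "(c *\<^sub>R A) ** B = c *\<^sub>R (A ** B)"
  by (simp_all add: vec_eq_iff matrix_matrix_mult_def sum_3 algebra_simps)

lemma mm_add: "(A::real^3^3) ** (B + C) = A ** B + A ** C" "(A + B) ** C = A ** C + B ** (C::real^3^3)"
  by (simp_all add: matrix_add_ldistrib mm_add_rdistrib)

lemma mv_add: "(A::real^3^3) *v (a + b) = A *v a + A *v b" "(A + B) *v a = A *v a + B *v a"
  by (simp_all add: vec_eq_iff matrix_vector_mult_def sum_3 algebra_simps)

lemma mv_scaleR: "(A::real^3^3) *v (c *\<^sub>R a) = c *\<^sub>R (A *v a)"
  by (simp add: vec_eq_iff matrix_vector_mult_def sum_3 algebra_simps)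

lemma scaleR_mv: "(c *\<^sub>R (A::real^3^3)) *v a = c *\<^sub>R (A *v a)"
  by (simp add: vec_eq_iff matrix_vector_mult_def sum_3 algebra_simps)

lemma mat1_mv: "mat 1 *v (a::real^3) = a" by simp

lemma mat_eq_mv: "(\<And>v. (A::real^3^3) *v v = B *v v) \<Longrightarrow> A = B"
  by (metis matrix_eq)

lemma crit_common:
  assumes Ji: "invertible J" and k: "k0 > 0" "k1 > 0" "k2 > 0"
    and GR: "GR J k0 k2 R0 W0 R W = 0" and GW: "GW J k1 k2 R0 W0 R W = 0"
  shows "transpose R *v pp J R0 W0 R W = (- (k1 * ee J W0 W / k2)) *\<^sub>R W"
    "k0 *\<^sub>R ((transpose R ** R) ** Xm R) = (k1 * ee J W0 W) *\<^sub>R outer W (J *v W)"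
proof -
  define p where "p = pp J R0 W0 R W"
  define e where "e = ee J W0 W"
  have "J *v ((k1 * e) *\<^sub>R W + k2 *\<^sub>R (transpose R *v p)) = 0"
    using GW unfolding GW_def p_def e_def by (simp add: mv_add mv_scaleR del: transpose_matrix_vector)
  then have "(k1 * e) *\<^sub>R W + k2 *\<^sub>R (transpose R *v p) = 0"
    using Ji invertible_ker by blast
  then have "k2 *\<^sub>R (transpose R *v p) = - ((k1 * e) *\<^sub>R W)"
    by (simp add: eq_neg_iff_add_eq_0 add.commute)
  then have "(1/k2) *\<^sub>R (k2 *\<^sub>R (transpose R *v p)) = (1/k2) *\<^sub>R (- ((k1 * e) *\<^sub>R W))" by simp
  then show rtp: "transpose R *v p = (- (k1 * e / k2)) *\<^sub>R W" using k(3) by simp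
  have "transpose R ** (k0 *\<^sub>R (R ** Xm R) + k2 *\<^sub>R outer p (J *v W)) = 0"
    using GR unfolding GR_def p_def by simp
  then have "k0 *\<^sub>R ((transpose R ** R) ** Xm R) + k2 *\<^sub>R outer (transpose R *v p) (J *v W) = 0"
    by (simp add: mm_add mm_scaleR mm_outer matrix_mul_assoc del: transpose_matrix_vector)
  then have "k0 *\<^sub>R ((transpose R ** R) ** Xm R) - (k1 * e) *\<^sub>R outer W (J *v W) = 0"
    unfolding rtp outer_scaleR using k(3) by simp
  then show "k0 *\<^sub>R ((transpose R ** R) ** Xm R) = (k1 * ee J W0 W) *\<^sub>R outer W (J *v W)"
    by (simp add: e_def)
qed

lemma crit_e0:
  assumes Ji: "invertible J" and k: "k0 > 0" "k1 > 0" "k2 > 0"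
    and X: "norm (Xm R) \<le> 1/2"
    and GR: "GR J k0 k2 R0 W0 R W = 0" and GW: "GW J k1 k2 R0 W0 R W = 0"
    and e: "ee J W0 W = 0"
  shows "lyapV J k0 k1 k2 R0 W0 R W = 0"
proof -
  have X1: "norm (Xm R) < 1" using X by simp
  note c = crit_common[OF Ji k GR GW]
  have "(transpose R ** R) ** Xm R = 0" using c(2) e k by simp
  then have "Xm R *v v = 0" for v
    using small_X_M_inj[OF X1, of "Xm R *v v"] by (simp add: matrix_vector_mul_assoc del: transpose_matrix_vector)
  then have X0: "Xm R = 0" using mat_eq_mv[of "Xm R" 0] by simp
  have "transpose R *v pp J R0 W0 R W = 0" using c(1) e by simp
  moreover have "invertible (transpose R)" using small_X_inv(1)[OF X1] transpose_invertible by blast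
  ultimately have "pp J R0 W0 R W = 0" using invertible_ker by blast
  then show ?thesis using X0 e V_zero_iff[OF k] by blast
qed

lemma crit_alg:
  assumes Js: "transpose J = J" and Ji: "invertible J" and k: "k0 > 0" "k1 > 0" "k2 > 0"
    and X: "norm (Xm R) \<le> 1/2" and Epos: "energy J W > 0"
    and GR: "GR J k0 k2 R0 W0 R W = 0" and GW: "GW J k1 k2 R0 W0 R W = 0"
    and e0: "ee J W0 W \<noteq> 0"
  shows "\<exists>l x. l > 0 \<and> (\<exists>v. v \<noteq> 0 \<and> J *v v = l *\<^sub>R v) \<and> \<bar>x\<bar> \<le> 1/2
     \<and> x * (1 + x) = 2 * (k1/k0) * ee J W0 W * (energy J W0 + ee J W0 W)
     \<and> (norm (angmom J R0 W0))\<^sup>2 = 2*l*(energy J W0 + ee J W0 W)*(1+x)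
          + 4*(k1/k2)*ee J W0 W*(energy J W0 + ee J W0 W)
          + 2*(k1/k2)^2*(ee J W0 W)^2*(energy J W0 + ee J W0 W)/(l*(1+x))"
proof -
  define X where "X = Xm R"
  define M where "M = transpose R ** R"
  define u where "u = J *v W"
  define p where "p = pp J R0 W0 R W"
  define e where "e = ee J W0 W"
  define E where "E = energy J W"
  define \<kappa> where "\<kappa> = k1 / k2"
  have EE: "E = energy J W0 + e" by (simp add: E_def e_def ee_def)
  have X1: "norm X < 1" using X by (simp add: X_def)
  have MX: "M = X + mat 1" by (simp add: M_def X_def Xm_def)
  note c = crit_common[OF Ji k GR GW]
  have rtp: "transpose R *v p = (- (\<kappa> * e)) *\<^sub>R W" using c(1) by (simp add: p_def e_def \<kappa>_def)
  have mx: "k0 *\<^sub>R (M ** X) = (k1 * e) *\<^sub>R outer W u" using c(2) by (simp add: M_def X_def e_def u_def)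
  have uW: "inner u W = 2 * E" unfolding u_def E_def energy_def by (simp add: inner_commute)
  have Wne: "W \<noteq> 0" using Epos by (auto simp: energy_def)
  have WW: "inner W W > 0" using Wne by simp
  have ke: "k1 * e \<noteq> 0" using e0 k by (simp add: e_def)
  have Xs: "transpose X = X" by (simp add: X_def Xm_sym)
  have MXs: "transpose (M ** X) = M ** X"
    by (simp add: MX mm_add transpose_mm Xs transpose_add)
  have sym: "outer W u = outer u W"
  proof -
    have "(k1 * e) *\<^sub>R outer W u = (k1 * e) *\<^sub>R transpose (outer W u)"
      using mx MXs by (metis transpose_scalar)
    then show ?thesis using ke by (simp add: transpose_outer)
  qed
  define l where "l = inner u W / inner W W"
  have ul: "u = l *\<^sub>R W"
  proof -
    have "outer W u *v W = outer u W *v W" using sym by simp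
    then have "inner u W *\<^sub>R W = inner W W *\<^sub>R u" by (simp add: outer_mv)
    then have "(1 / inner W W) *\<^sub>R (inner u W *\<^sub>R W) = (1 / inner W W) *\<^sub>R (inner W W *\<^sub>R u)" by simp
    then show ?thesis using WW unfolding l_def by simp
  qed
  have lpos: "l > 0" unfolding l_def uW using Epos WW by (simp add: E_def)
  have lWW: "l * inner W W = 2 * E" using WW by (simp add: l_def uW)
  have comm: "X ** outer W u = outer W u ** X"
  proof -
    have "X ** (M ** X) = (M ** X) ** X"
      by (simp add: MX mm_add matrix_mul_assoc)
    then have "X ** (k0 *\<^sub>R (M ** X)) = (k0 *\<^sub>R (M ** X)) ** X" by (simp add: mm_scaleR)
    then have "(k1 * e) *\<^sub>R (X ** outer W u) = (k1 * e) *\<^sub>R (outer W u ** X)"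
      unfolding mx by (simp add: mm_scaleR)
    then show ?thesis using ke by simp
  qed
  define x where "x = inner u (X *v W) / inner u W"
  have uWne: "inner u W \<noteq> 0" using uW Epos by (simp add: E_def)
  have XW: "X *v W = x *\<^sub>R W"
  proof -
    have "(X ** outer W u) *v W = (outer W u ** X) *v W" using comm by simp
    then have "inner u W *\<^sub>R (X *v W) = inner u (X *v W) *\<^sub>R W"
      by (simp add: matrix_vector_mul_assoc[symmetric] outer_mv mv_scaleR)
    then have "(1 / inner u W) *\<^sub>R (inner u W *\<^sub>R (X *v W)) = (1 / inner u W) *\<^sub>R (inner u (X *v W) *\<^sub>R W)"
      by simp
    then show ?thesis using uWne by (simp add: x_def)
  qed
  have MW: "M *v W = (1 + x) *\<^sub>R W" by (simp add: MX mv_add XW algebra_simps)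
  have xb: "\<bar>x\<bar> \<le> 1/2"
  proof -
    have "\<bar>x\<bar> * norm W = norm (X *v W)" by (simp add: XW)
    also have "\<dots> \<le> norm X * norm W" by (rule mv_bound)
    also have "\<dots> \<le> 1/2 * norm W" using X by (intro mult_right_mono) (auto simp: X_def)
    finally show ?thesis using Wne by simp
  qed
  have x1: "1 + x > 0" using xb by linarith
  have xeq: "x * (1 + x) = 2 * (k1/k0) * e * E"
  proof -
    have "k0 *\<^sub>R ((M ** X) *v W) = (k1 * e) *\<^sub>R (outer W u *v W)"
      using arg_cong[OF mx, of "\<lambda>A. A *v W"] by (simp add: scaleR_mv)
    then have "(k0 * (x * (1 + x))) *\<^sub>R W = (k1 * e * (2 * E)) *\<^sub>R W"
      by (simp add: matrix_vector_mul_assoc[symmetric] XW mv_scaleR MW outer_mv uW algebra_simps)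
    then have "k0 * (x * (1 + x)) = k1 * e * (2 * E)" using Wne by (simp add: scaleR_cancel_right)
    then show ?thesis using k by (simp add: field_simps)
  qed
  have eig: "J *v W = l *\<^sub>R W" using ul by (simp add: u_def)
  have pi: "angmom J R W = l *\<^sub>R (R *v W)" by (simp add: angmom_def eig mv_scaleR)
  have pi0: "angmom J R0 W0 = angmom J R W - p" by (simp add: p_def pp_def)
  have RR: "inner (R *v a) (R *v b) = inner (M *v a) b" for a b
    using inner_mv[of "R *v a" R b] by (simp add: M_def matrix_vector_mul_assoc inner_commute del: transpose_matrix_vector)
  have pipi: "inner (angmom J R W) (angmom J R W) = 2 * l * E * (1 + x)"
  proof -
    have "inner (angmom J R W) (angmom J R W) = l * l * inner (M *v W) W" by (simp add: pi RR)
    also have "\<dots> = l * (1 + x) * (l * inner W W)" by (simp add: MW)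
    finally show ?thesis using lWW by simp
  qed
  have pip: "inner (angmom J R W) p = - 2 * \<kappa> * e * E"
  proof -
    have "inner (angmom J R W) p = l * inner W (transpose R *v p)"
      using inner_mv[of p R W] by (simp add: pi inner_commute del: transpose_matrix_vector)
    also have "\<dots> = - (\<kappa> * e) * (l * inner W W)" by (simp add: rtp del: transpose_matrix_vector)
    finally show ?thesis using lWW by simp
  qed
  define q where "q = (- (\<kappa> * e) / (1 + x)) *\<^sub>R W"
  have pq: "p = R *v q"
  proof -
    have "transpose R *v (R *v q) = M *v q" by (simp add: M_def matrix_vector_mul_assoc del: transpose_matrix_vector)
    also have "\<dots> = transpose R *v p" using x1 by (simp add: q_def mv_scaleR mv_neg MW rtp del: transpose_matrix_vector)
    finally have "transpose R *v (p - R *v q) = 0" by (simp add: matrix_vector_mult_diff_distrib del: transpose_matrix_vector)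
    moreover have "invertible (transpose R)" using small_X_inv(1) X1 transpose_invertible by (auto simp: X_def)
    ultimately have "p - R *v q = 0" using invertible_ker by blast
    then show ?thesis by simp
  qed
  have MWW: "inner (M *v W) W = (1 + x) * inner W W" by (simp add: MW)
  have pp2: "inner p p = 2 * \<kappa>^2 * e^2 * E / (l * (1 + x))"
  proof -
    have "inner p p = (\<kappa> * e / (1 + x))^2 * inner (M *v W) W"
      by (simp add: pq RR q_def mv_scaleR mv_neg power2_eq_square)
    also have "\<dots> = (\<kappa> * e)^2 / (1 + x) * inner W W"
    proof -
      have nz: "1 + x \<noteq> 0" using x1 by simp
      have "(\<kappa> * e / (1 + x))^2 * ((1 + x) * inner W W) = ((\<kappa> * e)^2 / (1 + x)) * (((1 + x) / (1 + x)) * inner W W)"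
        by (simp add: power_divide power2_eq_square)
      then show ?thesis unfolding MWW using nz by simp
    qed
    also have "inner W W = 2 * E / l" using lWW lpos by (simp add: field_simps)
    finally show ?thesis using x1 lpos by (simp add: power_mult_distrib field_simps)
  qed
  have "(norm (angmom J R0 W0))\<^sup>2 = inner (angmom J R W) (angmom J R W) - 2 * inner (angmom J R W) p + inner p p"
    by (simp add: pi0 power2_norm_eq_inner inner_diff_left inner_diff_right inner_commute)
  also have "\<dots> = 2*l*E*(1+x) + 4*\<kappa>*e*E + 2*\<kappa>^2*e^2*E/(l*(1+x))"
    by (simp add: pipi pip pp2)
  finally have fin: "(norm (angmom J R0 W0))\<^sup>2 = 2*l*E*(1+x) + 4*\<kappa>*e*E + 2*\<kappa>^2*e^2*E/(l*(1+x))" .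
  show ?thesis
    apply (rule exI[of _ l], rule exI[of _ x])
    using lpos eig Wne xb xeq fin by (auto simp: EE \<kappa>_def e_def)
qed

lemma crit_main:
  assumes J: "sym_pos_def_mat J" and k: "k0 > 0" "k1 > 0" "k2 > 0" and W0: "W0 \<noteq> 0"
  shows "\<exists>c>0. c \<le> k0/16 \<and> c \<le> k1/2 \<and> (\<forall>R W. lyapV J k0 k1 k2 R0 W0 R W \<le> c \<longrightarrow>
     GR J k0 k2 R0 W0 R W = 0 \<longrightarrow> GW J k1 k2 R0 W0 R W = 0 \<longrightarrow> lyapV J k0 k1 k2 R0 W0 R W = 0)"
proof -
  have Js: "transpose J = J" and Ji: "invertible J"
    using J spd_invertible by (auto simp: sym_pos_def_mat_def)
  define E0 where "E0 = energy J W0"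
  have "0 < inner W0 (J *v W0)" using J W0 unfolding sym_pos_def_mat_def by blast
  then have E0: "E0 > 0" by (simp add: E0_def energy_def)
  define L where "L = {l. \<exists>v::real^3. v \<noteq> 0 \<and> J *v v = l *\<^sub>R v}"
  have Lfin: "finite L" using eig_finite[OF Js] by (simp add: L_def)
  have Lpos: "l > 0" if "l \<in> L" for l
  proof -
    have "\<exists>v. v \<noteq> 0 \<and> J *v v = l *\<^sub>R v" using that by (simp add: L_def)
    then obtain v where v: "v \<noteq> 0" "J *v v = l *\<^sub>R v" by blast
    then have "0 < inner v (J *v v)" using J unfolding sym_pos_def_mat_def by blast
    then have "0 < l * inner v v" using v by simp
    moreover have "inner v v > 0" using v by simp
    ultimately show ?thesis by (simp add: zero_less_mult_iff)
  qed
  define P where "P = (norm (angmom J R0 W0))\<^sup>2"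
  have kk: "k1/k2 > 0" "k1/k0 > 0" using k by auto
  have "\<forall>l\<in>L. \<exists>\<delta>>0. \<forall>e x. 0 < \<bar>e\<bar> \<and> \<bar>e\<bar> \<le> \<delta> \<and> \<bar>x\<bar> \<le> 1/2 \<and> x * (1 + x) = 2 * (k1/k0) * e * (E0 + e)
      \<and> P = 2*l*(E0+e)*(1+x) + 4*(k1/k2)*e*(E0+e) + 2*(k1/k2)^2*e^2*(E0+e)/(l*(1+x)) \<longrightarrow> False"
  proof
    fix l assume "l \<in> L"
    show "\<exists>\<delta>>0. \<forall>e x. 0 < \<bar>e\<bar> \<and> \<bar>e\<bar> \<le> \<delta> \<and> \<bar>x\<bar> \<le> 1/2 \<and> x * (1 + x) = 2 * (k1/k0) * e * (E0 + e)
      \<and> P = 2*l*(E0+e)*(1+x) + 4*(k1/k2)*e*(E0+e) + 2*(k1/k2)^2*e^2*(E0+e)/(l*(1+x)) \<longrightarrow> False"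
      by (rule scalar_main[OF Lpos[OF \<open>l \<in> L\<close>] E0 kk])
  qed
  then obtain \<delta> where \<delta>all: "\<forall>l\<in>L. \<delta> l > 0 \<and> (\<forall>e x. 0 < \<bar>e\<bar> \<and> \<bar>e\<bar> \<le> \<delta> l \<and> \<bar>x\<bar> \<le> 1/2 \<and> x * (1 + x) = 2 * (k1/k0) * e * (E0 + e)
      \<and> P = 2*l*(E0+e)*(1+x) + 4*(k1/k2)*e*(E0+e) + 2*(k1/k2)^2*e^2*(E0+e)/(l*(1+x)) \<longrightarrow> False)"
    using bchoice[of L] by (metis (no_types, lifting))
  have \<delta>1: "\<And>l. l \<in> L \<Longrightarrow> \<delta> l > 0" using \<delta>all by blast
  define d where "d = Min (insert 1 (insert (E0/2) (\<delta> ` L)))"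
  have dfin: "finite (insert 1 (insert (E0/2) (\<delta> ` L)))" using Lfin by simp
  have dpos: "d > 0" unfolding d_def using dfin \<delta>1 E0 by (subst Min_gr_iff) auto
  have dle1: "d \<le> 1" unfolding d_def by (rule Min_le[OF dfin]) simp
  have dle2: "d \<le> E0/2" unfolding d_def by (rule Min_le[OF dfin]) simp
  have dle3: "d \<le> \<delta> l" if "l \<in> L" for l unfolding d_def by (rule Min_le[OF dfin]) (simp add: that)
  define c where "c = min (k0/16) (k1 * d\<^sup>2 / 2)"
  have cpos: "c > 0" using k dpos by (simp add: c_def)
  have d2: "d\<^sup>2 \<le> 1" using dle1 dpos by (simp add: power_le_one)
  have c1: "c \<le> k0/16" "c \<le> k1 * d\<^sup>2 / 2" by (auto simp: c_def)
  have "k1 * d\<^sup>2 / 2 \<le> k1 * 1 / 2" using d2 k by (intro divide_right_mono mult_left_mono) auto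
  then have c2: "c \<le> k1/2" using c1(2) by simp
  have "\<forall>R W. lyapV J k0 k1 k2 R0 W0 R W \<le> c \<longrightarrow>
     GR J k0 k2 R0 W0 R W = 0 \<longrightarrow> GW J k1 k2 R0 W0 R W = 0 \<longrightarrow> lyapV J k0 k1 k2 R0 W0 R W = 0"
  proof (intro allI impI)
    fix R W
    assume V: "lyapV J k0 k1 k2 R0 W0 R W \<le> c" and GR: "GR J k0 k2 R0 W0 R W = 0" and GW: "GW J k1 k2 R0 W0 R W = 0"
    have X: "norm (Xm R) \<le> 1/2" and eb: "\<bar>ee J W0 W\<bar> \<le> d"
      using V_small2[OF k V c1 less_imp_le[OF dpos]] by auto
    show "lyapV J k0 k1 k2 R0 W0 R W = 0"
    proof (cases "ee J W0 W = 0")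
      case True
      then show ?thesis using crit_e0[OF Ji k X GR GW] by blast
    next
      case False
      have "energy J W = E0 + ee J W0 W" by (simp add: ee_def E0_def)
      moreover have "\<bar>ee J W0 W\<bar> \<le> E0/2" using eb dle2 by linarith
      ultimately have Ep: "energy J W > 0" using E0 by linarith
      obtain l x where lx: "l > 0" "\<exists>v. v \<noteq> 0 \<and> J *v v = l *\<^sub>R v" "\<bar>x\<bar> \<le> 1/2"
        "x * (1 + x) = 2 * (k1/k0) * ee J W0 W * (E0 + ee J W0 W)"
        "P = 2*l*(E0 + ee J W0 W)*(1+x) + 4*(k1/k2)*ee J W0 W*(E0 + ee J W0 W)
          + 2*(k1/k2)^2*(ee J W0 W)^2*(E0 + ee J W0 W)/(l*(1+x))"
        using crit_alg[OF Js Ji k X Ep GR GW False] unfolding P_def E0_def by blast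
      have lL: "l \<in> L" using lx(2) by (simp add: L_def)
      have "\<bar>ee J W0 W\<bar> \<le> \<delta> l" using eb dle3[OF lL] by linarith
      moreover have "0 < \<bar>ee J W0 W\<bar>" using False by simp
      ultimately show ?thesis using \<delta>all lL lx(3) lx(4) lx(5) by blast
    qed
  qed
  then show ?thesis using cpos c1(1) c2 by blast
qed


lemma contU_V: "continuous_on UNIV (\<lambda>x. lyapV J k0 k1 k2 R0 W0 (fst x) (snd x))"
  by (intro continuous_at_imp_continuous_on ballI cont_V continuous_intros)

lemma contU_G: "continuous_on UNIV (\<lambda>x. (norm (GR J k0 k2 R0 W0 (fst x) (snd x)))\<^sup>2 + (norm (GW J k1 k2 R0 W0 (fst x) (snd x)))\<^sup>2)"
  by (intro continuous_at_imp_continuous_on ballI cont_G continuous_intros)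

lemma contU_det: "continuous_on UNIV (\<lambda>x::mat3 \<times> vec3. det (fst x))"
  by (intro continuous_at_imp_continuous_on ballI cont_det continuous_intros)

lemma sol_cont:
  assumes "\<And>t. t \<ge> 0 \<Longrightarrow> (f has_vector_derivative f' t) (at t within {0..})"
  shows "continuous_on {0..} f"
  unfolding continuous_on_eq_continuous_within
  using assms has_vector_derivative_continuous by (metis atLeast_iff)

lemma det_pos_path:
  assumes c: "continuous_on {0..} (R :: real \<Rightarrow> mat3)" and nz: "\<And>t. t \<ge> 0 \<Longrightarrow> det (R t) \<noteq> 0"
    and d0: "det (R 0) > 0" and t: "t \<ge> 0"
  shows "det (R t) > 0"
proof (rule ccontr)
  assume "\<not> det (R t) > 0"
  then have le: "det (R t) \<le> 0" by simp
  have "continuous_on {0..t} (\<lambda>s. det (R s))"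
  proof -
    have "continuous_on {0..t} R" using c by (rule continuous_on_subset) auto
    then show ?thesis unfolding continuous_on_eq_continuous_within
      by (auto intro: cont_det)
  qed
  then obtain s where "0 \<le> s" "s \<le> t" "det (R s) = 0"
    using IVT2'[of "\<lambda>s. det (R s)" t 0 0] le d0 t by auto
  then show False using nz by auto
qed

lemma trace_add3: "trace ((A::real^3^3) + B) = trace A + trace B"
  by (simp add: trace_def sum.distrib)

lemma trace_mat1: "trace (mat 1 :: real^3^3) = 3"
  by (simp add: trace_def mat_def sum_3)

lemma V_sub_compact:
  assumes J: "sym_pos_def_mat J" and k: "k0 > 0" "k1 > 0" "k2 > 0"
    and c: "c \<le> k0/16" "c \<le> k1/2"
    and F: "closed F" "F \<subseteq> {x. lyapV J k0 k1 k2 R0 W0 (fst x) (snd x) \<le> c}"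
  shows "compact F"
proof -
  obtain m where m: "m > 0" "\<And>v. inner v (J *v v) \<ge> m * (norm v)\<^sup>2" using pd_bound[OF J] by blast
  define K where "K = 2 * (energy J W0 + 1) / m"
  have bd: "norm R \<le> 3 \<and> norm W \<le> sqrt K" if "lyapV J k0 k1 k2 R0 W0 R W \<le> c" for R W
  proof -
    have c': "c \<le> k1 * 1\<^sup>2 / 2" using c by simp
    have X: "norm (Xm R) \<le> 1/2" and e: "\<bar>ee J W0 W\<bar> \<le> 1"
      using V_small2[OF k that c(1) c'] by auto
    have "(norm R)\<^sup>2 = trace (Xm R + mat 1)"
      by (simp add: power2_norm_eq_inner inner_self_trace Xm_def)
    also have "\<dots> \<le> 3 * norm (Xm R) + 3" using trace_le[of "Xm R"] by (simp add: trace_add3 trace_mat1)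
    also have "\<dots> \<le> 3\<^sup>2" using X by simp
    finally have R: "norm R \<le> 3" by (rule power2_le_imp_le) simp
    have "m * (norm W)\<^sup>2 \<le> inner W (J *v W)" by (rule m(2))
    also have "\<dots> = 2 * (energy J W0 + ee J W0 W)" by (simp add: energy_def ee_def)
    also have "\<dots> \<le> 2 * (energy J W0 + 1)" using e by simp
    finally have "(norm W)\<^sup>2 \<le> K" using m(1) by (simp add: K_def field_simps)
    then show ?thesis using R real_le_rsqrt by blast
  qed
  have "F \<subseteq> cball 0 3 \<times> cball 0 (sqrt K)"
    using F(2) bd by (force simp: mem_cball_0)
  then have "F = F \<inter> (cball 0 3 \<times> cball 0 (sqrt K))" by blast
  moreover have "compact (F \<inter> (cball 0 3 \<times> cball 0 (sqrt K)))"
    using F(1) by (intro closed_Int_compact compact_Times compact_cball)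
  ultimately show ?thesis by simp
qed

lemma zero_path:
  fixes R :: "real \<Rightarrow> mat3"
  assumes k: "k0 > 0" "k1 > 0" "k2 > 0" and cR: "continuous_on {0..} R"
    and V0: "\<And>t. t \<ge> 0 \<Longrightarrow> lyapV J k0 k1 k2 R0 W0 (R t) (W t) = 0"
    and r0: "rotation_matrix (R 0)" and t: "t \<ge> 0"
  shows "(R t, W t) \<in> target_set J R0 W0"
proof -
  have orth: "orthogonal_matrix (R s)" if "s \<ge> 0" for s
    using V0[OF that] V_zero_iff[OF k] Xm_zero_iff by blast
  have nz: "det (R s) \<noteq> 0" if "s \<ge> 0" for s
    using det_orthogonal_matrix[OF orth[OF that]] by auto
  have "det (R t) > 0" using det_pos_path[OF cR nz _ t] r0 by (auto simp: rot_iff)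
  then have "(R t, W t) \<in> {p \<in> dom_U. lyapV J k0 k1 k2 R0 W0 (fst p) (snd p) = 0}"
    using V0[OF t] by (simp add: dom_U_def)
  then show ?thesis using target_eq[OF k] by blast
qed

theorem theorem5:
  fixes J R0 :: "real^3^3" and W0 :: "real^3" and k0 k1 k2 :: real
  assumes "sym_pos_def_mat J"
    and "rotation_matrix R0"
    and "W0 \<noteq> 0"
    and "k0 > 0" and "k1 > 0" and "k2 > 0"
  shows "\<exists>c>0.
     (\<forall>Rt Wt. ctrl_solution J k0 k1 k2 R0 W0 Rt Wt \<longrightarrow>
        (Rt 0, Wt 0) \<in> {p \<in> dom_U. 0 \<le> lyapV J k0 k1 k2 R0 W0 (fst p) (snd p)
                                    \<and> lyapV J k0 k1 k2 R0 W0 (fst p) (snd p) \<le> c} \<longrightarrow>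
        (\<forall>t\<ge>0. (Rt t, Wt t) \<in> {p \<in> dom_U. 0 \<le> lyapV J k0 k1 k2 R0 W0 (fst p) (snd p)
                                    \<and> lyapV J k0 k1 k2 R0 W0 (fst p) (snd p) \<le> c})
        \<and> ((\<lambda>t. infdist (Rt t, Wt t) {p \<in> dom_U. lyapV J k0 k1 k2 R0 W0 (fst p) (snd p) = 0})
              \<longlongrightarrow> 0) at_top)
   \<and> {p \<in> dom_U. lyapV J k0 k1 k2 R0 W0 (fst p) (snd p) = 0} = target_set J R0 W0
   \<and> (\<forall>Rt Wt. ctrl_solution J k0 k1 k2 R0 W0 Rt Wt \<longrightarrow> (Rt 0, Wt 0) \<in> target_set J R0 W0 \<longrightarrow>
        (\<forall>t\<ge>0. (Rt t, Wt t) \<in> target_set J R0 W0))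
   \<and> (\<forall>Rt Wt. free_solution J Rt Wt \<longrightarrow> (Rt 0, Wt 0) \<in> target_set J R0 W0 \<longrightarrow>
        (\<forall>t\<ge>0. (Rt t, Wt t) \<in> target_set J R0 W0))"
proof -
  note J = assms(1)
  have k: "k0 > 0" "k1 > 0" "k2 > 0" using assms by auto
  have Js: "transpose J = J" and Ji: "invertible J"
    using J spd_invertible by (auto simp: sym_pos_def_mat_def)
  obtain c where c: "c > 0" "c \<le> k0/16" "c \<le> k1/2"
    and crit: "\<And>R W. lyapV J k0 k1 k2 R0 W0 R W \<le> c \<Longrightarrow>
     GR J k0 k2 R0 W0 R W = 0 \<Longrightarrow> GW J k1 k2 R0 W0 R W = 0 \<Longrightarrow> lyapV J k0 k1 k2 R0 W0 R W = 0"
    using crit_main[OF J k assms(3), of R0] by blast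
  define V where "V = (\<lambda>x::mat3 \<times> vec3. lyapV J k0 k1 k2 R0 W0 (fst x) (snd x))"
  define G where "G = (\<lambda>x::mat3 \<times> vec3. (norm (GR J k0 k2 R0 W0 (fst x) (snd x)))\<^sup>2 + (norm (GW J k1 k2 R0 W0 (fst x) (snd x)))\<^sup>2)"
  define Z where "Z = {p \<in> dom_U. lyapV J k0 k1 k2 R0 W0 (fst p) (snd p) = 0}"
  have Zeq: "Z = target_set J R0 W0" unfolding Z_def by (rule target_eq[OF k])
  have Vnn: "V x \<ge> 0" for x unfolding V_def using V_nonneg k by simp
  have contV: "continuous_on UNIV V" unfolding V_def by (rule contU_V)
  have contG: "continuous_on UNIV G" unfolding G_def by (rule contU_G)
  have Gnn: "G x \<ge> 0" for x unfolding G_def by simp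
  have ctrl_facts: "continuous_on {0..} Rt \<and> (\<forall>a b. 0 \<le> a \<longrightarrow> a \<le> b \<longrightarrow> V (Rt b, Wt b) \<le> V (Rt a, Wt a))
      \<and> (\<forall>t\<ge>0. ((\<lambda>t. V (Rt t, Wt t)) has_real_derivative - G (Rt t, Wt t)) (at t within {0..}))"
    if sol: "ctrl_solution J k0 k1 k2 R0 W0 Rt Wt" for Rt Wt
  proof -
    have d: "\<And>t. t \<ge> 0 \<Longrightarrow> ((\<lambda>t. V (Rt t, Wt t)) has_real_derivative - G (Rt t, Wt t)) (at t within {0..})"
      unfolding V_def G_def using V_deriv_ctrl[OF J sol] by simp
    have "continuous_on {0..} Rt"
      by (rule sol_cont[of Rt "\<lambda>t. ctrl_R J k0 k1 k2 R0 W0 (Rt t) (Wt t)"]) (use sol in \<open>auto simp: ctrl_solution_def\<close>)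
    moreover have "V (Rt b, Wt b) \<le> V (Rt a, Wt a)" if "0 \<le> a" "a \<le> b" for a b
    proof (rule nonincr[OF d _ that])
      fix t :: real
      show "- G (Rt t, Wt t) \<le> 0" using Gnn[of "(Rt t, Wt t)"] by simp
    qed
    ultimately show ?thesis using d by blast
  qed
  have traj: "(\<forall>t\<ge>0. (Rt t, Wt t) \<in> {p \<in> dom_U. 0 \<le> lyapV J k0 k1 k2 R0 W0 (fst p) (snd p)
                                    \<and> lyapV J k0 k1 k2 R0 W0 (fst p) (snd p) \<le> c})
        \<and> ((\<lambda>t. infdist (Rt t, Wt t) {p \<in> dom_U. lyapV J k0 k1 k2 R0 W0 (fst p) (snd p) = 0})
              \<longlongrightarrow> 0) at_top"
    if sol: "ctrl_solution J k0 k1 k2 R0 W0 Rt Wt"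
      and h0: "(Rt 0, Wt 0) \<in> {p \<in> dom_U. 0 \<le> lyapV J k0 k1 k2 R0 W0 (fst p) (snd p)
                                    \<and> lyapV J k0 k1 k2 R0 W0 (fst p) (snd p) \<le> c}" for Rt Wt
  proof -
    note cf = ctrl_facts[OF sol]
    define v where "v t = V (Rt t, Wt t)" for t
    have vmono: "v b \<le> v a" if "0 \<le> a" "a \<le> b" for a b using cf that by (simp add: v_def)
    have v0: "v 0 \<le> c" using h0 by (simp add: v_def V_def)
    have vc: "v t \<le> c" if "t \<ge> 0" for t using vmono[of 0 t] that v0 by simp
    have vnn: "v t \<ge> 0" for t by (simp add: v_def Vnn)
    have c': "c \<le> k1 * 1\<^sup>2 / 2" using c by simp
    have Xs: "norm (Xm (Rt t)) \<le> 1/2" if "t \<ge> 0" for t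
      using V_small2[OF k _ c(2) c', of J R0 W0 "Rt t" "Wt t"] vc[OF that] by (simp add: v_def V_def)
    have detpos: "det (Rt t) > 0" if "t \<ge> 0" for t
    proof (rule det_pos_path[OF _ _ _ that])
      show "continuous_on {0..} Rt" using cf by blast
      show "det (Rt s) \<noteq> 0" if "s \<ge> 0" for s using small_X_inv(2) Xs[OF that] by simp
      show "det (Rt 0) > 0" using h0 by (simp add: dom_U_def)
    qed
    have part1: "\<forall>t\<ge>0. (Rt t, Wt t) \<in> {p \<in> dom_U. 0 \<le> lyapV J k0 k1 k2 R0 W0 (fst p) (snd p)
                                    \<and> lyapV J k0 k1 k2 R0 W0 (fst p) (snd p) \<le> c}"
      using detpos vc vnn by (simp add: dom_U_def v_def V_def)
    have small: "\<exists>T\<ge>0. v T < \<epsilon>" if eps: "\<epsilon> > 0" for \<epsilon>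
    proof (rule ccontr)
      assume "\<not> (\<exists>T\<ge>0. v T < \<epsilon>)"
      then have ge: "v t \<ge> \<epsilon>" if "t \<ge> 0" for t using that not_less by blast
      define K where "K = {x. \<epsilon> \<le> V x \<and> V x \<le> c}"
      have Kc: "compact K"
      proof (rule V_sub_compact[OF J k c(2,3)])
        show "closed K" unfolding K_def
          using contV by (intro closed_Collect_conj closed_Collect_le continuous_intros) auto
        show "K \<subseteq> {x. lyapV J k0 k1 k2 R0 W0 (fst x) (snd x) \<le> c}" by (auto simp: K_def V_def)
      qed
      have inK: "(Rt t, Wt t) \<in> K" if "t \<ge> 0" for t using ge[OF that] vc[OF that] by (simp add: K_def v_def)
      then have "K \<noteq> {}" by blast
      then obtain x0 where x0: "x0 \<in> K" "\<forall>y\<in>K. G x0 \<le> G y"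
        using continuous_attains_inf[OF Kc _ continuous_on_subset[OF contG]] by blast
      have mpos: "G x0 > 0"
      proof (rule ccontr)
        assume "\<not> G x0 > 0"
        then have "(norm (GR J k0 k2 R0 W0 (fst x0) (snd x0)))\<^sup>2 + (norm (GW J k1 k2 R0 W0 (fst x0) (snd x0)))\<^sup>2 = 0"
          using Gnn[of x0] unfolding G_def by linarith
        then have "(norm (GR J k0 k2 R0 W0 (fst x0) (snd x0)))\<^sup>2 = 0" "(norm (GW J k1 k2 R0 W0 (fst x0) (snd x0)))\<^sup>2 = 0"
          by (simp_all add: add_nonneg_eq_0_iff)
        then have "GR J k0 k2 R0 W0 (fst x0) (snd x0) = 0" "GW J k1 k2 R0 W0 (fst x0) (snd x0) = 0"
          by simp_all
        then have "V x0 = 0" using crit x0(1) by (simp add: K_def V_def)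
        then show False using x0(1) eps by (simp add: K_def)
      qed
      define m where "m = G x0"
      define f where "f t = v t + m * t" for t
      have fd: "(f has_real_derivative (- G (Rt t, Wt t) + m)) (at t within {0..})" if "t \<ge> 0" for t
      proof -
        have "((\<lambda>t. v t) has_real_derivative - G (Rt t, Wt t)) (at t within {0..})"
          using cf that by (simp add: v_def)
        then have "((\<lambda>t. v t + m * t) has_real_derivative (- G (Rt t, Wt t) + m * 1)) (at t within {0..})"
          by (intro DERIV_add DERIV_cmult DERIV_ident)
        then show ?thesis unfolding f_def[abs_def] by simp
      qed
      have fneg: "- G (Rt t, Wt t) + m \<le> 0" if "t \<ge> 0" for t using x0(2) inK[OF that] by (simp add: m_def)
      define T where "T = (c + 1) / m"
      have T: "T \<ge> 0" using mpos c by (simp add: T_def m_def)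
      have "f T \<le> f 0" by (rule nonincr[OF fd fneg]) (use T in auto)
      then have "v T + m * T \<le> v 0" by (simp add: f_def)
      moreover have "m * T = c + 1" using mpos by (simp add: T_def m_def)
      ultimately show False using v0 vnn[of T] by linarith
    qed
    have vlim: "(v \<longlongrightarrow> 0) at_top"
    proof (rule tendstoI)
      fix \<epsilon> :: real assume "\<epsilon> > 0"
      then obtain T where T: "T \<ge> 0" "v T < \<epsilon>" using small by blast
      have "eventually (\<lambda>t. t \<ge> T) at_top" by (rule eventually_ge_at_top)
      then show "eventually (\<lambda>t. dist (v t) 0 < \<epsilon>) at_top"
      proof (rule eventually_mono)
        fix t assume "t \<ge> T"
        then have "v t \<le> v T" using vmono T by blast
        then show "dist (v t) 0 < \<epsilon>" using T vnn[of t] by simp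
      qed
    qed
    have R0Z: "(R0, W0) \<in> Z" using assms(2) Zeq by (simp add: target_set_def)
    have ilim: "((\<lambda>t. infdist (Rt t, Wt t) Z) \<longlongrightarrow> 0) at_top"
    proof (rule tendstoI)
      fix \<epsilon> :: real assume eps: "\<epsilon> > 0"
      define K where "K = {x. V x \<le> c \<and> 0 \<le> det (fst x) \<and> \<epsilon> \<le> infdist x Z}"
      have Kc: "compact K"
      proof (rule V_sub_compact[OF J k c(2,3)])
        have ci: "continuous_on UNIV (\<lambda>x::mat3\<times>vec3. infdist x Z)"
          by (intro continuous_at_imp_continuous_on ballI continuous_intros)
        show "closed K" unfolding K_def
          using contV contU_det ci by (intro closed_Collect_conj closed_Collect_le continuous_intros) auto
        show "K \<subseteq> {x. lyapV J k0 k1 k2 R0 W0 (fst x) (snd x) \<le> c}" by (auto simp: K_def V_def)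
      qed
      have ev0: "eventually (\<lambda>t::real. t \<ge> 0) at_top" by (rule eventually_ge_at_top)
      show "eventually (\<lambda>t. dist (infdist (Rt t, Wt t) Z) 0 < \<epsilon>) at_top"
      proof (cases "K = {}")
        case True
        show ?thesis using ev0
        proof (rule eventually_mono)
          fix t :: real assume t: "t \<ge> 0"
          have "(Rt t, Wt t) \<notin> K" using True by blast
          then have "infdist (Rt t, Wt t) Z < \<epsilon>"
            using vc[OF t] detpos[OF t] by (auto simp: K_def v_def)
          then show "dist (infdist (Rt t, Wt t) Z) 0 < \<epsilon>" by (simp add: infdist_nonneg)
        qed
      next
        case False
        then obtain x1 where x1: "x1 \<in> K" "\<forall>y\<in>K. V x1 \<le> V y"
          using continuous_attains_inf[OF Kc _ continuous_on_subset[OF contV]] by blast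
        have mpos: "V x1 > 0"
        proof (rule ccontr)
          assume "\<not> V x1 > 0"
          then have V0: "V x1 = 0" using Vnn[of x1] by simp
          then have "orthogonal_matrix (fst x1)"
            using V_zero_iff[OF k] Xm_zero_iff by (simp add: V_def)
          then have "det (fst x1) = 1 \<or> det (fst x1) = -1" by (rule det_orthogonal_matrix)
          then have "det (fst x1) > 0" using x1(1) by (auto simp: K_def)
          then have "x1 \<in> Z" using V0 by (cases x1) (simp add: Z_def dom_U_def V_def)
          then show False using x1(1) eps by (simp add: K_def)
        qed
        have "eventually (\<lambda>t. dist (v t) 0 < V x1) at_top" using vlim mpos by (rule tendstoD)
        then show ?thesis using ev0
        proof (rule eventually_elim2)
          fix t :: real assume a: "dist (v t) 0 < V x1" and t: "t \<ge> 0"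
          have "(Rt t, Wt t) \<notin> K"
          proof
            assume "(Rt t, Wt t) \<in> K"
            then have "V x1 \<le> v t" using x1(2) by (simp add: v_def)
            then show False using a vnn[of t] by simp
          qed
          then have "infdist (Rt t, Wt t) Z < \<epsilon>"
            using vc[OF t] detpos[OF t] by (auto simp: K_def v_def)
          then show "dist (infdist (Rt t, Wt t) Z) 0 < \<epsilon>" by (simp add: infdist_nonneg)
        qed
      qed
    qed
    show ?thesis using part1 ilim by (simp add: Z_def)
  qed
  have inv_ctrl: "\<forall>t\<ge>0. (Rt t, Wt t) \<in> target_set J R0 W0"
    if sol: "ctrl_solution J k0 k1 k2 R0 W0 Rt Wt" and h0: "(Rt 0, Wt 0) \<in> target_set J R0 W0" for Rt Wt
  proof (intro allI impI)
    fix t :: real assume t: "t \<ge> 0"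
    note cf = ctrl_facts[OF sol]
    have "(Rt 0, Wt 0) \<in> Z" using h0 Zeq by simp
    then have V0: "V (Rt 0, Wt 0) = 0" by (simp add: Z_def V_def)
    have Vz: "lyapV J k0 k1 k2 R0 W0 (Rt s) (Wt s) = 0" if "s \<ge> 0" for s
      using cf that V0 Vnn[of "(Rt s, Wt s)"] by (force simp: V_def)
    have cR: "continuous_on {0..} Rt" using cf by blast
    have r0: "rotation_matrix (Rt 0)" using h0 by (simp add: target_set_def)
    show "(Rt t, Wt t) \<in> target_set J R0 W0"
      by (rule zero_path[OF k cR Vz r0 t])
  qed
  have inv_free: "\<forall>t\<ge>0. (Rt t, Wt t) \<in> target_set J R0 W0"
    if sol: "free_solution J Rt Wt" and h0: "(Rt 0, Wt 0) \<in> target_set J R0 W0" for Rt Wt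
  proof (intro allI impI)
    fix t :: real assume t: "t \<ge> 0"
    have d: "\<And>t. t \<ge> 0 \<Longrightarrow> ((\<lambda>t. V (Rt t, Wt t)) has_real_derivative 0) (at t within {0..})"
      unfolding V_def using V_deriv_free[OF J sol] by simp
    have cR: "continuous_on {0..} Rt"
      by (rule sol_cont[of Rt "\<lambda>t. Rt t ** hat (Wt t)"]) (use sol in \<open>auto simp: free_solution_def\<close>)
    have "(Rt 0, Wt 0) \<in> Z" using h0 Zeq by simp
    then have V0: "V (Rt 0, Wt 0) = 0" by (simp add: Z_def V_def)
    have Vz: "lyapV J k0 k1 k2 R0 W0 (Rt s) (Wt s) = 0" if "s \<ge> 0" for s
    proof -
      have "V (Rt s, Wt s) \<le> V (Rt 0, Wt 0)" by (rule nonincr[OF d _ _ that]) auto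
      then show ?thesis using V0 Vnn[of "(Rt s, Wt s)"] by (simp add: V_def)
    qed
    have r0: "rotation_matrix (Rt 0)" using h0 by (simp add: target_set_def)
    show "(Rt t, Wt t) \<in> target_set J R0 W0"
      by (rule zero_path[OF k cR Vz r0 t])
  qed
  show ?thesis
    using c(1) traj Zeq[unfolded Z_def] inv_ctrl inv_free by blast
qed

end
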